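(* For each $l\in\mathbb N$ there exists a constant $B_l$ such that, for each $j\in\mathbb N$ and all large enough $t$, $$\big|\mathbb E K^{(j)}_t(l)-\mathbb E\mathcal K^{(j)}_{\lfloor t\rfloor}(l)\big|\le B_l;$$ the constant $B_l$ does not depend on $j$.
   Context: Let $(p_k)_{k\in\mathbb N}$ be a probability distribution on $\mathbb N$ with $p_k>0$ for infinitely many $k$. For a word $r=r_1\cdots r_j\in\mathbb N^j$ write $|r|=j$, $p_r:=p_{r_1}\cdots p_{r_j}$; words of length $j$ are the generation-$j$ boxes. Nested Karlin occupancy scheme: balls $1,2,\ldots$ are thrown independently; ball $i$ carries an i.i.d. sequence $\xi_{i,1},\xi_{i,2},\ldots$ with law $(p_k)$ and lies, in generation $j$, in box $\xi_{i,1}\cdots\xi_{i,j}$. $\mathcal K_n^{(j)}(l)$ is the number of generation-$j$ boxes containing at least $l$ of balls $1,\ldots,n$; with $(\pi(t))_{t\ge0}$ a unit-rate Poisson process independent of the balls, $K^{(j)}_t(l):=\mathcal K^{(j)}_{\pi(t)}(l)$. *)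

theory Defs
  imports "HOL-Probability.Probability"
begin

text \<open>Ball i carries the i.i.d. sequence (omega i 0, omega i 1, ...) with law p;
  the balls are independent.\<close>

definition ball_space :: "nat pmf \<Rightarrow> (nat \<Rightarrow> nat \<Rightarrow> nat) measure" where
  "ball_space p = PiM UNIV (\<lambda>i::nat. PiM UNIV (\<lambda>k::nat. measure_pmf p))"

text \<open>The generation-j box of ball i is the word xi_{i,1} ... xi_{i,j}.\<close>

definition box :: "(nat \<Rightarrow> nat \<Rightarrow> nat) \<Rightarrow> nat \<Rightarrow> nat \<Rightarrow> nat list" where
  "box \<omega> j i = map (\<omega> i) [0..<j]"

text \<open>Number of generation-j boxes containing at least l of the balls 1..n
  (balls are indexed 0..n-1 here).\<close>

definition occ :: "(nat \<Rightarrow> nat \<Rightarrow> nat) \<Rightarrow> nat \<Rightarrow> nat \<Rightarrow> nat \<Rightarrow> nat" where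
  "occ \<omega> j l n = card {r. length r = j \<and> l \<le> card {i. i < n \<and> box \<omega> j i = r}}"

definition EK_fixed :: "nat pmf \<Rightarrow> nat \<Rightarrow> nat \<Rightarrow> nat \<Rightarrow> real" where
  "EK_fixed p j l n = integral\<^sup>L (ball_space p) (\<lambda>\<omega>. real (occ \<omega> j l n))"

text \<open>Expectation of the Poissonized count K_t = count at pi(t), where pi(t) is
  Poisson(t) distributed and independent of the balls.\<close>

definition EK_pois :: "nat pmf \<Rightarrow> nat \<Rightarrow> nat \<Rightarrow> real \<Rightarrow> real" where
  "EK_pois p j l t = integral\<^sup>L (ball_space p \<Otimes>\<^sub>M measure_pmf (poisson_pmf t))
      (\<lambda>(\<omega>, N). real (occ \<omega> j l N))"

end

theory Submission
  imports Defs
begin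


lemma d_up:
  fixes d :: "nat \<Rightarrow> real"
  assumes dd: "\<And>k. \<bar>d (Suc k) - d k\<bar> \<le> L / (real k + 1)" and L: "L \<ge> 0"
  shows "\<bar>d (a + m) - d a\<bar> \<le> L * m / (real a + 1)"
proof (induction m)
  case 0 then show ?case by simp
next
  case (Suc m)
  have "L / (real (a + m) + 1) \<le> L / (real a + 1)"
    using L by (intro divide_left_mono) auto
  then have "\<bar>d (Suc (a + m)) - d (a + m)\<bar> \<le> L / (real a + 1)" using dd[of "a+m"] by linarith
  with Suc show ?case by (simp add: add_divide_distrib distrib_left)
qed

lemma d_glob:
  fixes d :: "nat \<Rightarrow> real"
  assumes dd: "\<And>k. \<bar>d (Suc k) - d k\<bar> \<le> L / (real k + 1)" and L: "L \<ge> 1"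
    and d01: "\<And>k. 0 \<le> d k \<and> d k \<le> 1"
  shows "\<bar>d k - d n\<bar> \<le> 2 * L * \<bar>real k - real n\<bar> / (real n + 1)"
proof (cases "n \<le> k")
  case True
  then obtain m where k: "k = n + m" using le_Suc_ex by blast
  have "\<bar>d (n + m) - d n\<bar> \<le> L * m / (real n + 1)" using d_up[OF dd] L by simp
  also have "\<dots> \<le> 2 * L * m / (real n + 1)" using L by (intro divide_right_mono) auto
  finally show ?thesis using k by simp
next
  case False
  then obtain m where n: "n = k + m" by (metis le_Suc_ex nat_le_linear)
  show ?thesis
  proof (cases "2 * k + 1 \<ge> n")
    case True
    have "\<bar>d (k + m) - d k\<bar> \<le> L * m / (real k + 1)" using d_up[OF dd] L by simp
    also have "\<dots> \<le> 2 * L * m / (real n + 1)"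
    proof -
      have "real n \<le> real (2 * k + 1)" using True by (simp only: of_nat_le_iff)
      then have "real n + 1 \<le> 2 * (real k + 1)" by simp
      then have "L * m * (real n + 1) \<le> L * m * (2 * (real k + 1))" using L by (intro mult_left_mono) auto
      then show ?thesis by (simp add: divide_simps) (simp add: algebra_simps)
    qed
    finally show ?thesis using n by (simp add: abs_minus_commute)
  next
    case False
    have "\<bar>d k - d n\<bar> \<le> 1" using d01[of k] d01[of n] by auto
    also have "1 \<le> 2 * L * \<bar>real k - real n\<bar> / (real n + 1)"
    proof -
      have "real n + 1 \<le> 2 * \<bar>real k - real n\<bar>" using False n by simp
      also have "\<dots> \<le> 2 * L * \<bar>real k - real n\<bar>" using L by (simp add: mult_right_mono)
      finally show ?thesis by (simp add: divide_simps)
    qed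
    finally show ?thesis .
  qed
qed

lemma R_bound:
  fixes f :: "nat \<Rightarrow> real"
  assumes dd: "\<And>k. \<bar>(f (Suc (Suc k)) - f (Suc k)) - (f (Suc k) - f k)\<bar> \<le> L / (real k + 1)"
    and L: "L \<ge> 1"
    and d01: "\<And>k. 0 \<le> f (Suc k) - f k \<and> f (Suc k) - f k \<le> 1"
  shows "\<bar>f N - f n - (real N - real n) * (f (Suc n) - f n)\<bar> \<le> 2 * L * (real N - real n)^2 / (real n + 1)"
proof -
  define d where "d k = f (Suc k) - f k" for k
  have g: "\<bar>d k - d n\<bar> \<le> 2 * L * \<bar>real k - real n\<bar> / (real n + 1)" for k
    using d_glob[of d L k n] dd d01 L unfolding d_def by auto
  have up: "\<bar>f (n + m) - f n - real m * d n\<bar> \<le> 2 * L * (real m)^2 / (real n + 1)" for m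
  proof (induction m)
    case 0 then show ?case by simp
  next
    case (Suc m)
    have e: "f (n + Suc m) - f n - real (Suc m) * d n = (f (n + m) - f n - real m * d n) + (d (n+m) - d n)"
      by (simp add: d_def algebra_simps)
    have "\<bar>d (n+m) - d n\<bar> \<le> 2 * L * m / (real n + 1)" using g[of "n+m"] by simp
    moreover have "2 * L * (real m)^2 / (real n + 1) + 2 * L * m / (real n + 1) \<le> 2 * L * (real (Suc m))^2 / (real n + 1)"
    proof -
      have "2 * L * (real m)^2 + 2 * L * m \<le> 2 * L * (real (Suc m))^2"
        using L by (simp add: power2_eq_square algebra_simps)
      then show ?thesis unfolding add_divide_distrib[symmetric] by (intro divide_right_mono) auto
    qed
    ultimately show ?case using Suc e by linarith
  qed
  have down: "m \<le> n \<Longrightarrow> \<bar>f (n - m) - f n + real m * d n\<bar> \<le> 2 * L * (real m)^2 / (real n + 1)" for m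
  proof (induction m)
    case 0 then show ?case by simp
  next
    case (Suc m)
    then have mn: "m < n" by simp
    have e: "f (n - Suc m) - f n + real (Suc m) * d n = (f (n - m) - f n + real m * d n) + (d n - d (n - Suc m))"
    proof -
      have "n - m = Suc (n - Suc m)" using mn by simp
      then show ?thesis by (simp add: d_def algebra_simps)
    qed
    have "\<bar>d (n - Suc m) - d n\<bar> \<le> 2 * L * \<bar>real (n - Suc m) - real n\<bar> / (real n + 1)" by (rule g)
    also have "\<bar>real (n - Suc m) - real n\<bar> = real (Suc m)" using mn by (simp add: of_nat_diff)
    finally have "\<bar>d n - d (n - Suc m)\<bar> \<le> 2 * L * real (Suc m) / (real n + 1)" by (simp add: abs_minus_commute)
    moreover have "2 * L * (real m)^2 / (real n + 1) + 2 * L * real (Suc m) / (real n + 1) \<le> 2 * L * (real (Suc m))^2 / (real n + 1)"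
    proof -
      have "2 * L * (real m)^2 + 2 * L * real (Suc m) \<le> 2 * L * (real (Suc m))^2"
        using L by (simp add: power2_eq_square algebra_simps)
      then show ?thesis unfolding add_divide_distrib[symmetric] by (intro divide_right_mono) auto
    qed
    ultimately show ?case using Suc mn e by linarith
  qed
  show ?thesis
  proof (cases "n \<le> N")
    case True
    then obtain m where "N = n + m" using le_Suc_ex by blast
    then show ?thesis using up[of m] by (simp add: d_def)
  next
    case False
    then obtain m where N: "N = n - m" "m \<le> n" by (metis diff_diff_cancel diff_le_self nat_le_linear)
    then have "real N - real n = - real m" by (simp add: of_nat_diff)
    then show ?thesis using down[OF N(2)] N(1) by (simp add: d_def)
  qed
qed



lemma expect_nat:
  fixes M :: "nat pmf" and g :: "nat \<Rightarrow> real"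
  assumes "summable (\<lambda>N. norm (pmf M N * g N))"
  shows "integrable M g" "measure_pmf.expectation M g = (\<Sum>N. pmf M N * g N)"
proof -
  show i: "integrable M g"
    using assms unfolding measure_pmf_eq_density
    by (subst integrable_density) (auto simp: integrable_count_space_nat_iff)
  have "measure_pmf.expectation M g = (\<integral>N. pmf M N * g N \<partial>count_space UNIV)"
    unfolding measure_pmf_eq_density by (subst integral_density) auto
  also have "\<dots> = (\<Sum>N. pmf M N * g N)"
    using assms by (intro integral_count_space_nat) (simp add: integrable_count_space_nat_iff)
  finally show "measure_pmf.expectation M g = (\<Sum>N. pmf M N * g N)" .
qed

lemma poisson_sums:
  fixes t :: real assumes t: "t > 0"
  shows "(\<lambda>N. pmf (poisson_pmf t) N) sums 1"
    and "(\<lambda>N. pmf (poisson_pmf t) N * real N) sums t"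
    and "(\<lambda>N. pmf (poisson_pmf t) N * (real N)^2) sums (t^2 + t)"
proof -
  have e: "(\<lambda>n. t^n / fact n) sums exp t"
    using exp_converges[of t] by (simp add: divide_inverse mult.commute)
  have p: "pmf (poisson_pmf t) N = t^N / fact N * exp (-t)" for N using t by simp
  show s1: "(\<lambda>N. pmf (poisson_pmf t) N) sums 1"
    unfolding p using sums_mult2[OF e, of "exp (-t)"] unfolding exp_minus_inverse .
  have suc: "pmf (poisson_pmf t) (Suc m) * real (Suc m) = t * pmf (poisson_pmf t) m" for m
  proof -
    have f: "(fact (Suc m)::real) = (real m + 1) * fact m" by simp
    have nz: "(real m + 1) * (fact m::real) > 0" by (intro mult_pos_pos) auto
    have "t ^ Suc m / ((real m + 1) * fact m) * exp (- t) * real (Suc m)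
        = t * (t ^ m / fact m * exp (- t)) * (((real m + 1) * fact m) / ((real m + 1) * fact m))"
      by (simp add: field_simps)
    also have "\<dots> = t * (t ^ m / fact m * exp (- t))" using nz by simp
    finally show ?thesis unfolding p f .
  qed
  have "(\<lambda>m. pmf (poisson_pmf t) (Suc m) * real (Suc m)) sums (t * 1)"
    unfolding suc by (intro sums_mult s1)
  then show s2: "(\<lambda>N. pmf (poisson_pmf t) N * real N) sums t"
    by (subst (asm) sums_Suc_iff) simp
  have suc2: "pmf (poisson_pmf t) (Suc m) * (real (Suc m))^2 = t * (pmf (poisson_pmf t) m * real m + pmf (poisson_pmf t) m)" for m
  proof -
    have "pmf (poisson_pmf t) (Suc m) * (real (Suc m))^2 = (pmf (poisson_pmf t) (Suc m) * real (Suc m)) * real (Suc m)"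
      by (simp only: power2_eq_square mult.assoc)
    also have "\<dots> = t * pmf (poisson_pmf t) m * real (Suc m)" by (simp only: suc)
    also have "\<dots> = t * (pmf (poisson_pmf t) m * real m + pmf (poisson_pmf t) m)" by (simp add: algebra_simps)
    finally show ?thesis .
  qed
  have "(\<lambda>m. pmf (poisson_pmf t) (Suc m) * (real (Suc m))^2) sums (t * (t + 1))"
    unfolding suc2 by (intro sums_mult sums_add s1 s2)
  then show "(\<lambda>N. pmf (poisson_pmf t) N * (real N)^2) sums (t^2 + t)"
    by (subst (asm) sums_Suc_iff) (simp add: power2_eq_square algebra_simps)
qed

lemma poisson_main:
  fixes f :: "nat \<Rightarrow> real"
  assumes dd: "\<And>k. \<bar>(f (Suc (Suc k)) - f (Suc k)) - (f (Suc k) - f k)\<bar> \<le> L / (real k + 1)"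
    and L: "L \<ge> 1"
    and d01: "\<And>k. 0 \<le> f (Suc k) - f k \<and> f (Suc k) - f k \<le> 1"
    and t: "t \<ge> 1"
  shows "integrable (poisson_pmf t) f"
    and "\<bar>measure_pmf.expectation (poisson_pmf t) f - f (nat \<lfloor>t\<rfloor>)\<bar> \<le> 4 * L + 1"
proof -
  define n where "n = nat \<lfloor>t\<rfloor>"
  have tn: "real n \<le> t" "t < real n + 1" unfolding n_def using t by linarith+
  define P where "P = poisson_pmf t"
  define d where "d = f (Suc n) - f n"
  define c where "c = 2 * L / (real n + 1)"
  define R where "R N = f N - f n - (real N - real n) * d" for N
  have c0: "c \<ge> 0" unfolding c_def using L by simp
  have Rb: "\<bar>R N\<bar> \<le> c * (real N - real n)^2" for N
    using R_bound[OF dd L d01, of N n] unfolding R_def d_def c_def by simp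
  have s1: "(\<lambda>N. pmf P N * 1) sums 1" using poisson_sums(1)[of t] t by (simp add: P_def)
  have s2: "(\<lambda>N. pmf P N * real N) sums t" using poisson_sums(2)[of t] t by (simp add: P_def)
  have s3: "(\<lambda>N. pmf P N * (real N)^2) sums (t^2 + t)" using poisson_sums(3)[of t] t by (simp add: P_def)
  have i1: "integrable P (\<lambda>_. 1::real)" by simp
  have i2: "integrable P (\<lambda>N. real N)" and e2: "measure_pmf.expectation P (\<lambda>N. real N) = t"
    using expect_nat[of P "\<lambda>N. real N"] s2 by (auto simp: sums_iff)
  have i3: "integrable P (\<lambda>N. (real N)^2)" and e3: "measure_pmf.expectation P (\<lambda>N. (real N)^2) = t^2 + t"
    using expect_nat[of P "\<lambda>N. (real N)^2"] s3 by (auto simp: sums_iff)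
  have sq: "(real N - real n)^2 = (real N)^2 - 2 * real n * real N + (real n)^2" for N
    by (simp add: power2_eq_square algebra_simps)
  have iq: "integrable P (\<lambda>N. (real N - real n)^2)"
    unfolding sq using i2 i3 by auto
  have eq: "measure_pmf.expectation P (\<lambda>N. (real N - real n)^2) = t^2 + t - 2 * real n * t + (real n)^2"
    unfolding sq using i2 i3 e2 e3 by (simp add: Bochner_Integration.integral_diff Bochner_Integration.integral_add)
  have iR: "integrable P R"
    by (rule Bochner_Integration.integrable_bound[OF integrable_mult_right[OF iq, of c]])
       (use Rb c0 in auto)
  have fR: "f = (\<lambda>N. R N + f n + (real N - real n) * d)" unfolding R_def by simp
  have iN: "integrable P (\<lambda>N. (real N - real n) * d)" using i2 by auto
  show "integrable (poisson_pmf t) f"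
    unfolding P_def[symmetric] by (subst fR) (use iR iN in auto)
  have ef: "measure_pmf.expectation P f = measure_pmf.expectation P R + f n + (t - real n) * d"
    using iR iN i2 e2
    by (subst fR) (simp add: Bochner_Integration.integral_add Bochner_Integration.integral_diff)
  have "\<bar>measure_pmf.expectation P R\<bar> \<le> measure_pmf.expectation P (\<lambda>N. c * (real N - real n)^2)"
  proof -
    have "\<bar>measure_pmf.expectation P R\<bar> \<le> measure_pmf.expectation P (\<lambda>N. \<bar>R N\<bar>)"
      using integral_norm_bound[of P R] by simp
    also have "\<dots> \<le> measure_pmf.expectation P (\<lambda>N. c * (real N - real n)^2)"
      using iR iq Rb by (intro integral_mono) auto
    finally show ?thesis .
  qed
  also have "\<dots> = c * (t + (t - real n)^2)"
    by (simp only: integral_mult_right_zero eq) (simp add: power2_eq_square algebra_simps)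
  also have "\<dots> \<le> c * (2 * (real n + 1))"
  proof -
    have "(t - real n)^2 \<le> 1" using tn by (simp add: abs_square_le_1)
    moreover have "c \<ge> 0" unfolding c_def using L by simp
    ultimately show ?thesis using tn by (intro mult_left_mono) auto
  qed
  also have "\<dots> = 4 * L * ((real n + 1) / (real n + 1))" unfolding c_def by (simp add: field_simps)
  also have "\<dots> = 4 * L" by simp
  finally have a: "\<bar>measure_pmf.expectation P R\<bar> \<le> 4 * L" .
  have b: "\<bar>(t - real n) * d\<bar> \<le> 1"
    using d01[of n] tn unfolding d_def by (simp add: abs_mult mult_le_one)
  show "\<bar>measure_pmf.expectation (poisson_pmf t) f - f (nat \<lfloor>t\<rfloor>)\<bar> \<le> 4 * L + 1"
    using a b ef unfolding P_def[symmetric] n_def[symmetric] by linarith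
qed



primrec lpmf :: "'a pmf \<Rightarrow> nat \<Rightarrow> 'a list pmf" where
  "lpmf P 0 = return_pmf []"
| "lpmf P (Suc n) = map_pmf (\<lambda>(w, x). w @ [x]) (pair_pmf (lpmf P n) P)"

lemma pmf_lpmf:
  "pmf (lpmf P n) w = (if length w = n then (\<Prod>i<n. pmf P (w ! i)) else 0)"
proof (induction n arbitrary: w)
  case 0
  then show ?case by (simp add: pmf_return indicator_def)
next
  case (Suc n)
  have "pmf (lpmf P (Suc n)) w = measure (pair_pmf (lpmf P n) P) ((\<lambda>(w, x). w @ [x]) -` {w})"
    by (simp add: pmf_map)
  also have "\<dots> = (if length w = Suc n then (\<Prod>i<Suc n. pmf P (w ! i)) else 0)"
  proof (cases "w = []")
    case True
    then have "(\<lambda>(w, x). w @ [x]) -` {w} = {}" by auto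
    then show ?thesis using True by simp
  next
    case False
    then have pre: "(\<lambda>(w, x). w @ [x]) -` {w} = {(butlast w, last w)}"
      by (auto simp: snoc_eq_iff_butlast)
    have "measure (pair_pmf (lpmf P n) P) ((\<lambda>(w, x). w @ [x]) -` {w}) = pmf (lpmf P n) (butlast w) * pmf P (last w)"
      unfolding pre measure_pmf_single pmf_pair by simp
    also have "\<dots> = (if length w = Suc n then (\<Prod>i<Suc n. pmf P (w ! i)) else 0)"
    proof (cases "length w = Suc n")
      case True
      have "(\<Prod>i<n. pmf P (butlast w ! i)) = (\<Prod>i<n. pmf P (w ! i))"
        using True by (intro prod.cong) (auto simp: nth_butlast)
      moreover have "last w = w ! n" using True False by (simp add: last_conv_nth)
      ultimately show ?thesis using True Suc by (simp add: lessThan_Suc mult.commute)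
    next
      case F: False
      then have "length (butlast w) \<noteq> n" using False by auto
      then show ?thesis using F Suc by simp
    qed
    finally show ?thesis .
  qed
  finally show ?case .
qed

lemma set_lpmf: "w \<in> set_pmf (lpmf P n) \<Longrightarrow> length w = n"
  by (auto simp: set_pmf_iff pmf_lpmf split: if_splits)

definition cnt :: "'a list \<Rightarrow> 'a \<Rightarrow> nat" where
  "cnt w r = card {i. i < length w \<and> w ! i = r}"

lemma cnt_snoc: "cnt (w @ [x]) r = cnt w r + (if x = r then 1 else 0)"
proof -
  have "{i. i < length (w @ [x]) \<and> (w @ [x]) ! i = r} =
        {i. i < length w \<and> w ! i = r} \<union> (if x = r then {length w} else {})"
    by (auto simp: nth_append less_Suc_eq)
  then show ?thesis unfolding cnt_def by (simp add: card_insert_if)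
qed

lemma cnt_pos: "cnt w r > 0 \<Longrightarrow> r \<in> set w"
proof -
  assume "cnt w r > 0"
  then have "{i. i < length w \<and> w ! i = r} \<noteq> {}" unfolding cnt_def by (metis card.empty less_irrefl)
  then obtain i where "i < length w" "w ! i = r" by blast
  then show "r \<in> set w" using nth_mem by blast
qed

definition G :: "nat \<Rightarrow> nat \<Rightarrow> nat list list \<Rightarrow> nat" where
  "G j l w = card {r. length r = j \<and> l \<le> cnt w r}"

lemma G_sub: assumes "l \<ge> 1" shows "{r. length r = j \<and> l \<le> cnt w r} \<subseteq> set w"
proof
  fix r assume "r \<in> {r. length r = j \<and> l \<le> cnt w r}"
  then have "cnt w r > 0" using assms by auto
  then show "r \<in> set w" by (rule cnt_pos)
qed

lemma G_le: "l \<ge> 1 \<Longrightarrow> G j l w \<le> length w"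
  unfolding G_def using G_sub[of l j w]
  by (meson List.finite_set card_length card_mono order_trans)

lemma G_snoc:
  assumes "l \<ge> 1"
  shows "real (G j l (w @ [x])) - real (G j l w) = (if length x = j \<and> cnt w x + 1 = l then 1 else 0)"
proof -
  define S where "S = {r. length r = j \<and> l \<le> cnt w r}"
  have fin: "finite S" unfolding S_def using G_sub[OF assms] finite_subset by blast
  have S': "{r. length r = j \<and> l \<le> cnt (w @ [x]) r} = S \<union> (if length x = j \<and> cnt w x + 1 = l then {x} else {})"
    unfolding S_def cnt_snoc by auto
  show ?thesis
  proof (cases "length x = j \<and> cnt w x + 1 = l")
    case True
    then have "x \<notin> S" unfolding S_def by auto
    then have "card (insert x S) = Suc (card S)" using fin by simp
    then show ?thesis using True unfolding G_def S' S_def[symmetric] by simp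
  next
    case False
    then have e: "(if length x = j \<and> cnt w x + 1 = l then {x} else {}) = {}" by auto
    show ?thesis using False unfolding G_def S' S_def[symmetric] e by simp
  qed
qed

lemma map_eq_bernoulli: "map_pmf (\<lambda>y. y = x) P = bernoulli_pmf (pmf P x)"
proof (rule pmf_eqI)
  fix b :: bool
  show "pmf (map_pmf (\<lambda>y. y = x) P) b = pmf (bernoulli_pmf (pmf P x)) b"
  proof (cases b)
    case True
    have "(\<lambda>y. y = x) -` {True} = {x}" by auto
    then show ?thesis using True by (simp add: pmf_map measure_pmf_single pmf_le_1)
  next
    case False
    have "(\<lambda>y. y = x) -` {False} = UNIV - {x}" by auto
    moreover have "measure P (UNIV - {x}) = measure P UNIV - measure P {x}"
      by (rule measure_pmf.finite_measure_Diff) auto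
    ultimately show ?thesis using False
      by (simp add: pmf_map measure_pmf_single pmf_le_1)
  qed
qed

lemma cnt_binomial:
  "map_pmf (\<lambda>w. cnt w x) (lpmf P n) = binomial_pmf n (pmf P x)"
proof (induction n)
  case 0
  then show ?case by (simp add: cnt_def binomial_pmf_0 pmf_le_1)
next
  case (Suc n)
  have q: "pmf P x \<in> {0..1}" by (simp add: pmf_le_1)
  have "map_pmf (\<lambda>w. cnt w x) (lpmf P (Suc n)) =
        map_pmf (\<lambda>(k, b). k + (if b then 1 else 0)) (pair_pmf (map_pmf (\<lambda>w. cnt w x) (lpmf P n)) (map_pmf (\<lambda>y. y = x) P))"
    by (simp add: map_pmf_comp pair_map_pmf1 pair_map_pmf2 cnt_snoc case_prod_unfold eq_commute)
  also have "\<dots> = map_pmf (\<lambda>(k, b). k + (if b then 1 else 0)) (pair_pmf (binomial_pmf n (pmf P x)) (bernoulli_pmf (pmf P x)))"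
    unfolding Suc map_eq_bernoulli ..
  also have "\<dots> = binomial_pmf (Suc n) (pmf P x)"
    unfolding binomial_pmf_Suc[OF q]
    apply (simp add: pair_pmf_def map_pmf_def bind_assoc_pmf bind_return_pmf)
    apply (subst bind_commute_pmf)
    apply (simp add: add.commute)
    done
  finally show ?case .
qed



lemma binom_q_bound:
  assumes q: "0 \<le> q" "q \<le> 1"
  shows "q * pmf (binomial_pmf n q) k \<le> (real k + 1) / (real n + 1)"
proof (cases "k \<le> n")
  case False
  then show ?thesis using q by (simp add: binomial_eq_0 not_le)
next
  case True
  have nat_id: "real (Suc k) * real (Suc n choose Suc k) = real (Suc n) * real (n choose k)"
    using Suc_times_binomial[of k n] by (metis of_nat_mult)
  have "q * pmf (binomial_pmf n q) k = q * (real (n choose k) * q ^ k * (1 - q) ^ (n - k))"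
    using q by simp
  also have "\<dots> = (real (Suc n) * real (n choose k)) * q ^ Suc k * (1 - q) ^ (Suc n - Suc k) / real (Suc n)"
    by (simp add: field_simps)
  also have "\<dots> = real (Suc k) * (real (Suc n choose Suc k) * q ^ Suc k * (1 - q) ^ (Suc n - Suc k)) / real (Suc n)"
    unfolding nat_id[symmetric] by (simp add: field_simps)
  also have "\<dots> = real (Suc k) * pmf (binomial_pmf (Suc n) q) (Suc k) / real (Suc n)"
    using q by simp
  also have "\<dots> \<le> real (Suc k) * 1 / real (Suc n)"
    by (intro divide_right_mono mult_left_mono pmf_le_1) auto
  finally show ?thesis by (simp add: add.commute)
qed

lemma pmf_binomial_Suc_rec:
  assumes q: "0 \<le> q" "q \<le> 1"
  shows "pmf (binomial_pmf (Suc n) q) m =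
     q * (case m of 0 \<Rightarrow> 0 | Suc m' \<Rightarrow> pmf (binomial_pmf n q) m') + (1 - q) * pmf (binomial_pmf n q) m"
proof -
  have A: "pmf (binomial_pmf n q \<bind> (\<lambda>k. return_pmf (1 + k))) m = (case m of 0 \<Rightarrow> 0 | Suc m' \<Rightarrow> pmf (binomial_pmf n q) m')"
  proof -
    have e: "binomial_pmf n q \<bind> (\<lambda>k. return_pmf (1 + k)) = map_pmf Suc (binomial_pmf n q)"
      by (simp add: map_pmf_def)
    show ?thesis
    proof (cases m)
      case 0
      then show ?thesis unfolding e by (subst pmf_map_outside) auto
    next
      case (Suc m')
      then show ?thesis unfolding e by (simp add: pmf_map_inj')
    qed
  qed
  have B: "binomial_pmf n q \<bind> (\<lambda>k. return_pmf (0 + k)) = binomial_pmf n q"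
    by (simp add: bind_return_pmf')
  have "pmf (binomial_pmf (Suc n) q) m = pmf (bernoulli_pmf q \<bind> (\<lambda>b. binomial_pmf n q \<bind> (\<lambda>k. return_pmf ((if b then 1 else 0) + k)))) m"
    by (subst binomial_pmf_Suc) (use q in auto)
  also have "\<dots> = pmf (binomial_pmf n q \<bind> (\<lambda>k. return_pmf (1 + k))) m * q + pmf (binomial_pmf n q \<bind> (\<lambda>k. return_pmf (0 + k))) m * (1 - q)"
    by (simp only: pmf_bind[of "bernoulli_pmf q"] integral_bernoulli_pmf[OF q] if_True if_False)
  finally show ?thesis unfolding A B by (simp add: mult.commute)
qed

lemma binom_diff:
  assumes q: "0 \<le> q" "q \<le> 1" and l: "l \<ge> 1"
  shows "\<bar>pmf (binomial_pmf (Suc n) q) (l - 1) - pmf (binomial_pmf n q) (l - 1)\<bar> \<le> real l / (real n + 1)"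
proof -
  define m where "m = l - 1"
  have lm: "real l = real m + 1" using l unfolding m_def by simp
  define A where "A = (case m of 0 \<Rightarrow> 0 | Suc m' \<Rightarrow> pmf (binomial_pmf n q) m')"
  define B where "B = pmf (binomial_pmf n q) m"
  have e: "pmf (binomial_pmf (Suc n) q) m - B = q * A - q * B"
    using pmf_binomial_Suc_rec[OF q, of n m] unfolding A_def B_def by (simp add: algebra_simps)
  have A1: "0 \<le> q * A" "q * A \<le> real l / (real n + 1)"
  proof -
    show "0 \<le> q * A" unfolding A_def using q by (auto split: nat.split)
    show "q * A \<le> real l / (real n + 1)"
    proof (cases m)
      case 0 then show ?thesis unfolding A_def by simp
    next
      case (Suc m')
      have "q * A \<le> (real m' + 1) / (real n + 1)" unfolding A_def Suc using binom_q_bound[OF q] by simp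
      also have "\<dots> \<le> real l / (real n + 1)" using lm Suc by (intro divide_right_mono) auto
      finally show ?thesis .
    qed
  qed
  have B1: "0 \<le> q * B" "q * B \<le> real l / (real n + 1)"
    unfolding B_def using q binom_q_bound[OF q, of n m] lm by auto
  show ?thesis unfolding m_def[symmetric] using e A1 B1 unfolding B_def by linarith
qed



lemma pmf_integrable_bounded:
  fixes g :: "'a \<Rightarrow> real"
  assumes "\<And>x. x \<in> set_pmf M \<Longrightarrow> \<bar>g x\<bar> \<le> C"
  shows "integrable M g"
  by (rule measure_pmf.integrable_const_bound[where B=C]) (auto intro!: AE_pmfI assms)

lemma expectation_pair_iter:
  fixes g :: "'a \<times> 'b \<Rightarrow> real"
  assumes nn: "\<And>z. 0 \<le> g z" and bd: "\<And>z. g z \<le> C"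
  shows "measure_pmf.expectation (pair_pmf A B) g =
         measure_pmf.expectation A (\<lambda>a. measure_pmf.expectation B (\<lambda>b. g (a, b)))"
proof -
  have C0: "0 \<le> C" using nn[of undefined] bd[of undefined] by linarith
  have inner: "(\<integral>\<^sup>+ b. ennreal (g (a, b)) \<partial>B) = ennreal (measure_pmf.expectation B (\<lambda>b. g (a, b)))" for a
    by (rule nn_integral_eq_integral) (auto intro!: pmf_integrable_bounded[where C=C] simp: nn bd abs_of_nonneg C0)
  have inn: "0 \<le> measure_pmf.expectation B (\<lambda>b. g (a, b))" for a
    by (intro Bochner_Integration.integral_nonneg nn)
  have inb: "measure_pmf.expectation B (\<lambda>b. g (a, b)) \<le> C" for a
  proof -
    have "measure_pmf.expectation B (\<lambda>b. g (a, b)) \<le> measure_pmf.expectation B (\<lambda>b. C)"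
      by (intro integral_mono pmf_integrable_bounded[where C=C]) (auto simp: nn bd abs_of_nonneg C0)
    then show ?thesis by simp
  qed
  have "measure_pmf.expectation (pair_pmf A B) g = enn2real (\<integral>\<^sup>+ z. ennreal (g z) \<partial>pair_pmf A B)"
    by (rule integral_eq_nn_integral) (auto simp: nn)
  also have "(\<integral>\<^sup>+ z. ennreal (g z) \<partial>pair_pmf A B) = (\<integral>\<^sup>+ a. \<integral>\<^sup>+ b. ennreal (g (a, b)) \<partial>B \<partial>A)"
    by (rule nn_integral_pair_pmf')
  also have "\<dots> = (\<integral>\<^sup>+ a. ennreal (measure_pmf.expectation B (\<lambda>b. g (a, b))) \<partial>A)"
    unfolding inner ..
  also have "\<dots> = ennreal (measure_pmf.expectation A (\<lambda>a. measure_pmf.expectation B (\<lambda>b. g (a, b))))"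
    using inn inb
    by (intro nn_integral_eq_integral pmf_integrable_bounded[where C=C]) (auto simp: abs_of_nonneg)
  finally show ?thesis using inn
    by (simp add: Bochner_Integration.integral_nonneg)
qed

definition fF :: "nat pmf \<Rightarrow> nat \<Rightarrow> nat \<Rightarrow> nat \<Rightarrow> real" where
  "fF p j l n = measure_pmf.expectation (lpmf (lpmf p j) n) (\<lambda>w. real (G j l w))"

definition hh :: "nat pmf \<Rightarrow> nat \<Rightarrow> nat \<Rightarrow> nat \<Rightarrow> nat list \<Rightarrow> real" where
  "hh p j l n x = (if length x = j then pmf (binomial_pmf n (pmf (lpmf p j) x)) (l - 1) else 0)"

lemma fF_diff:
  assumes l: "l \<ge> 1"
  shows "fF p j l (Suc n) - fF p j l n = measure_pmf.expectation (lpmf p j) (hh p j l n)"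
proof -
  define W where "W = lpmf p j"
  define L where "L = lpmf W n"
  define P where "P = pair_pmf L W"
  define I where "I = (\<lambda>(w::nat list list, x::nat list). if length x = j \<and> cnt w x + 1 = l then 1 else (0::real))"
  have sup: "fst z \<in> set_pmf L" if "z \<in> set_pmf P" for z
    using that unfolding P_def by auto
  have i1: "integrable P (\<lambda>z. real (G j l (fst z @ [snd z])))"
  proof (rule pmf_integrable_bounded[where C="real n + 1"])
    fix z assume "z \<in> set_pmf P"
    then have "length (fst z) = n" using sup set_lpmf unfolding L_def by blast
    then show "\<bar>real (G j l (fst z @ [snd z]))\<bar> \<le> real n + 1"
      using G_le[OF l, of j "fst z @ [snd z]"] by simp
  qed
  have i2: "integrable P (\<lambda>z. real (G j l (fst z)))"
  proof (rule pmf_integrable_bounded[where C="real n"])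
    fix z assume "z \<in> set_pmf P"
    then have "length (fst z) = n" using sup set_lpmf unfolding L_def by blast
    then show "\<bar>real (G j l (fst z))\<bar> \<le> real n"
      using G_le[OF l, of j "fst z"] by simp
  qed
  have a: "fF p j l (Suc n) = measure_pmf.expectation P (\<lambda>z. real (G j l (fst z @ [snd z])))"
    unfolding fF_def P_def L_def W_def by (simp add: case_prod_unfold)
  have b: "fF p j l n = measure_pmf.expectation P (\<lambda>z. real (G j l (fst z)))"
    unfolding fF_def P_def L_def W_def by (rule expectation_pair_pmf_fst[symmetric])
  have "fF p j l (Suc n) - fF p j l n = measure_pmf.expectation P (\<lambda>z. real (G j l (fst z @ [snd z])) - real (G j l (fst z)))"
    unfolding a b using i1 i2 by (simp add: Bochner_Integration.integral_diff)
  also have "\<dots> = measure_pmf.expectation P I"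
    unfolding I_def by (intro Bochner_Integration.integral_cong refl) (auto simp: G_snoc[OF l])
  also have "\<dots> = measure_pmf.expectation (pair_pmf W L) (\<lambda>(x, w). I (w, x))"
    unfolding P_def by (subst pair_commute_pmf) (simp add: case_prod_unfold)
  also have "\<dots> = measure_pmf.expectation W (\<lambda>x. measure_pmf.expectation L (\<lambda>w. I (w, x)))"
    by (subst expectation_pair_iter[where C=1]) (auto simp: I_def)
  also have "\<dots> = measure_pmf.expectation W (hh p j l n)"
  proof (intro Bochner_Integration.integral_cong refl)
    fix x
    show "measure_pmf.expectation L (\<lambda>w. I (w, x)) = hh p j l n x"
    proof (cases "length x = j")
      case False
      then show ?thesis unfolding I_def hh_def by simp
    next
      case True
      have "measure_pmf.expectation L (\<lambda>w. I (w, x)) = measure_pmf.expectation L (\<lambda>w. indicator {l - 1} (cnt w x))"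
        unfolding I_def using True l by (intro Bochner_Integration.integral_cong refl) (auto simp: indicator_def)
      also have "\<dots> = measure_pmf.expectation (map_pmf (\<lambda>w. cnt w x) L) (indicator {l - 1})"
        by (simp only: integral_map_pmf)
      also have "\<dots> = pmf (binomial_pmf n (pmf W x)) (l - 1)"
        unfolding L_def cnt_binomial by (simp add: measure_pmf_single)
      finally show ?thesis unfolding hh_def W_def using True by simp
    qed
  qed
  finally show ?thesis unfolding W_def .
qed



definition Phi :: "nat \<Rightarrow> nat \<Rightarrow> (nat \<Rightarrow> nat \<Rightarrow> nat) \<Rightarrow> nat list list" where
  "Phi j n \<omega> = map (box \<omega> j) [0..<n]"

lemma occ_eq: "occ \<omega> j l n = G j l (Phi j n \<omega>)"
proof -
  have "\<And>r. {i. i < n \<and> map (box \<omega> j) [0..<n] ! i = r} = {i. i < n \<and> box \<omega> j i = r}" by auto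
  then show ?thesis unfolding occ_def G_def cnt_def Phi_def by simp
qed

lemma box_eq_iff: "box \<omega> j i = ys \<longleftrightarrow> length ys = j \<and> (\<forall>k<j. \<omega> i k = ys ! k)"
  unfolding box_def by (auto simp: list_eq_iff_nth_eq)

lemma Phi_eq_iff:
  "Phi j n \<omega> = xs \<longleftrightarrow> length xs = n \<and> (\<forall>i<n. length (xs ! i) = j) \<and> (\<forall>i<n. \<forall>k<j. \<omega> i k = xs ! i ! k)"
proof -
  have "Phi j n \<omega> = xs \<longleftrightarrow> length xs = n \<and> (\<forall>i<n. box \<omega> j i = xs ! i)"
    unfolding Phi_def by (auto simp: list_eq_iff_nth_eq)
  then show ?thesis unfolding box_eq_iff by blast
qed

abbreviation "Minner p \<equiv> PiM UNIV (\<lambda>k::nat. measure_pmf p)"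

lemma prob_inner: "prob_space (Minner p)"
  by (intro prob_space_PiM measure_pmf.prob_space_axioms)

lemma prob_ball: "prob_space (ball_space p)"
  unfolding ball_space_def by (intro prob_space_PiM prob_inner)

lemma space_ball: "space (ball_space p) = UNIV"
  unfolding ball_space_def by (simp add: space_PiM)

lemma space_inner: "space (Minner p) = UNIV"
  by (simp add: space_PiM)

definition XX :: "nat pmf \<Rightarrow> nat \<Rightarrow> nat list \<Rightarrow> (nat \<Rightarrow> nat) set" where
  "XX p j ys = {y \<in> space (Minner p). \<forall>k\<in>{..<j}. y k \<in> {ys ! k}}"

lemma XX_sets: "XX p j ys \<in> sets (Minner p)"
  unfolding XX_def by (intro sets.sets_Collect_finite_All sets_Collect_single') auto

lemma XX_emeasure: "emeasure (Minner p) (XX p j ys) = ennreal (\<Prod>k<j. pmf p (ys ! k))"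
proof -
  interpret product_prob_space "\<lambda>k::nat. measure_pmf p" UNIV
    by (intro product_prob_spaceI measure_pmf.prob_space_axioms)
  have "emeasure (Minner p) (XX p j ys) = (\<Prod>k\<in>{..<j}. emeasure (measure_pmf p) {ys ! k})"
    unfolding XX_def by (rule emeasure_PiM_Collect) auto
  also have "\<dots> = ennreal (\<Prod>k<j. pmf p (ys ! k))"
    by (simp add: emeasure_pmf_single prod_ennreal)
  finally show ?thesis .
qed

lemma Phi_pre:
  "Phi j n -` {xs} \<inter> space (ball_space p) =
    (if length xs = n \<and> (\<forall>i<n. length (xs ! i) = j)
     then {\<omega> \<in> space (ball_space p). \<forall>i\<in>{..<n}. \<omega> i \<in> XX p j (xs ! i)} else {})"
  unfolding XX_def space_ball space_inner using Phi_eq_iff[of j n _ xs] by auto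

lemma Phi_pre_sets: "Phi j n -` {xs} \<inter> space (ball_space p) \<in> sets (ball_space p)"
proof -
  have "{\<omega> \<in> space (ball_space p). \<forall>i\<in>{..<n}. \<omega> i \<in> XX p j (xs ! i)} \<in> sets (ball_space p)"
    unfolding ball_space_def using XX_sets by measurable
  then show ?thesis unfolding Phi_pre by simp
qed

lemma Phi_meas: "Phi j n \<in> measurable (ball_space p) (count_space UNIV)"
  by (subst measurable_count_space_eq2_countable) (auto intro: Phi_pre_sets)

lemma Phi_distr: "distr (ball_space p) (count_space UNIV) (Phi j n) = measure_pmf (lpmf (lpmf p j) n)"
proof (rule measure_eqI_countable[where A=UNIV])
  fix xs :: "nat list list"
  have "emeasure (distr (ball_space p) (count_space UNIV) (Phi j n)) {xs} =
        emeasure (ball_space p) (Phi j n -` {xs} \<inter> space (ball_space p))"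
    by (rule emeasure_distr[OF Phi_meas]) auto
  also have "\<dots> = ennreal (pmf (lpmf (lpmf p j) n) xs)"
  proof (cases "length xs = n \<and> (\<forall>i<n. length (xs ! i) = j)")
    case True
    interpret product_prob_space "\<lambda>i::nat. Minner p" UNIV
      by (intro product_prob_spaceI prob_inner)
    have "emeasure (ball_space p) {\<omega> \<in> space (ball_space p). \<forall>i\<in>{..<n}. \<omega> i \<in> XX p j (xs ! i)} =
          (\<Prod>i\<in>{..<n}. emeasure (Minner p) (XX p j (xs ! i)))"
      unfolding ball_space_def by (rule emeasure_PiM_Collect) (auto intro: XX_sets)
    also have "\<dots> = ennreal (\<Prod>i<n. \<Prod>k<j. pmf p (xs ! i ! k))"
      unfolding XX_emeasure by (simp add: prod_ennreal prod_nonneg)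
    also have "(\<Prod>i<n. \<Prod>k<j. pmf p (xs ! i ! k)) = pmf (lpmf (lpmf p j) n) xs"
      using True by (simp add: pmf_lpmf)
    finally show ?thesis unfolding Phi_pre using True by simp
  next
    case False
    have "pmf (lpmf (lpmf p j) n) xs = 0"
    proof (cases "length xs = n")
      case True
      with False obtain i where i: "i < n" "length (xs ! i) \<noteq> j" by auto
      have "(\<Prod>i<n. pmf (lpmf p j) (xs ! i)) = 0"
        using i by (intro prod_zero) (auto simp: pmf_lpmf)
      then show ?thesis using True by (simp add: pmf_lpmf)
    qed (simp add: pmf_lpmf)
    then show ?thesis unfolding Phi_pre if_not_P[OF False] by simp
  qed
  also have "\<dots> = emeasure (measure_pmf (lpmf (lpmf p j) n)) {xs}"
    by (simp add: emeasure_pmf_single)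
  finally show "emeasure (distr (ball_space p) (count_space UNIV) (Phi j n)) {xs} =
        emeasure (measure_pmf (lpmf (lpmf p j) n)) {xs}" .
qed auto

lemma EK_fixed_eq: "EK_fixed p j l n = fF p j l n"
proof -
  have "EK_fixed p j l n = integral\<^sup>L (ball_space p) (\<lambda>\<omega>. real (G j l (Phi j n \<omega>)))"
    unfolding EK_fixed_def occ_eq ..
  also have "\<dots> = integral\<^sup>L (distr (ball_space p) (count_space UNIV) (Phi j n)) (\<lambda>w. real (G j l w))"
    by (rule integral_distr[symmetric, OF Phi_meas]) auto
  also have "\<dots> = fF p j l n" unfolding Phi_distr fF_def ..
  finally show ?thesis .
qed



lemma hh_01: "0 \<le> hh p j l n x \<and> hh p j l n x \<le> 1"
  unfolding hh_def by (auto simp: pmf_le_1 simp del: pmf_binomial)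

lemma hh_int: "integrable (measure_pmf W) (hh p j l n)"
  by (rule pmf_integrable_bounded[where C=1]) (use hh_01 in auto)

lemma fF_d01:
  assumes l: "l \<ge> 1"
  shows "0 \<le> fF p j l (Suc k) - fF p j l k \<and> fF p j l (Suc k) - fF p j l k \<le> 1"
proof -
  have a: "0 \<le> measure_pmf.expectation (lpmf p j) (hh p j l k)"
    using hh_01 by (intro Bochner_Integration.integral_nonneg) auto
  have "measure_pmf.expectation (lpmf p j) (hh p j l k) \<le> measure_pmf.expectation (lpmf p j) (\<lambda>_. 1)"
    using hh_01 by (intro integral_mono hh_int) auto
  then show ?thesis using a fF_diff[OF l] by simp
qed

lemma fF_dd:
  assumes l: "l \<ge> 1"
  shows "\<bar>(fF p j l (Suc (Suc k)) - fF p j l (Suc k)) - (fF p j l (Suc k) - fF p j l k)\<bar> \<le> real l / (real k + 1)"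
proof -
  define W where "W = lpmf p j"
  have "(fF p j l (Suc (Suc k)) - fF p j l (Suc k)) - (fF p j l (Suc k) - fF p j l k) =
        measure_pmf.expectation W (\<lambda>x. hh p j l (Suc k) x - hh p j l k x)"
    unfolding fF_diff[OF l] W_def by (simp add: Bochner_Integration.integral_diff hh_int)
  also have "\<bar>\<dots>\<bar> \<le> measure_pmf.expectation W (\<lambda>x. \<bar>hh p j l (Suc k) x - hh p j l k x\<bar>)"
    using integral_norm_bound[of W "\<lambda>x. hh p j l (Suc k) x - hh p j l k x"] by simp
  also have "\<dots> \<le> measure_pmf.expectation W (\<lambda>x. real l / (real k + 1))"
  proof (intro integral_mono)
    show "integrable (measure_pmf W) (\<lambda>x. \<bar>hh p j l (Suc k) x - hh p j l k x\<bar>)"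
      using hh_int by auto
    fix x
    show "\<bar>hh p j l (Suc k) x - hh p j l k x\<bar> \<le> real l / (real k + 1)"
    proof (cases "length x = j")
      case True
      then show ?thesis unfolding hh_def using binom_diff[OF pmf_nonneg pmf_le_1 l] by simp
    next
      case False
      then show ?thesis unfolding hh_def by simp
    qed
  qed simp
  also have "\<dots> = real l / (real k + 1)" by simp
  finally show ?thesis .
qed

lemma fF_nonneg: "0 \<le> fF p j l n"
  unfolding fF_def by (intro Bochner_Integration.integral_nonneg) auto

lemma fF_poisson:
  assumes l: "l \<ge> 1" and t: "t \<ge> 1"
  shows "integrable (poisson_pmf t) (fF p j l)"
    and "\<bar>measure_pmf.expectation (poisson_pmf t) (fF p j l) - fF p j l (nat \<lfloor>t\<rfloor>)\<bar> \<le> 4 * real l + 1"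
  using poisson_main[of "fF p j l" "real l" t] fF_dd[OF l] fF_d01[OF l] l t by auto

lemma occ_le: "occ \<omega> j l n \<le> n" if "l \<ge> 1"
  unfolding occ_eq using G_le[OF that, of j "Phi j n \<omega>"] by (simp add: Phi_def)

lemma occ_meas: "(\<lambda>\<omega>. real (occ \<omega> j l n)) \<in> borel_measurable (ball_space p)"
  unfolding occ_eq by (rule measurable_compose[OF Phi_meas]) auto

lemma EK_pois_eq:
  assumes l: "l \<ge> 1" and t: "t \<ge> 1"
  shows "EK_pois p j l t = measure_pmf.expectation (poisson_pmf t) (fF p j l)"
proof -
  define M where "M = ball_space p"
  define Q where "Q = measure_pmf (poisson_pmf t)"
  interpret M: prob_space M unfolding M_def by (rule prob_ball)
  interpret Q: prob_space Q unfolding Q_def by (rule measure_pmf.prob_space_axioms)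
  interpret pair_prob_space M Q by unfold_locales
  define H where "H = (\<lambda>(\<omega>, N). real (occ \<omega> j l N))"
  have Hm: "H \<in> borel_measurable (M \<Otimes>\<^sub>M Q)"
  proof -
    have "(\<lambda>z. real (occ (fst z) j l (snd z))) \<in> borel_measurable (M \<Otimes>\<^sub>M Q)"
    proof (rule measurable_compose_countable'[where I=UNIV and f="\<lambda>i z. real (occ (fst z) j l i)" and g=snd])
      fix i :: nat assume "i \<in> (UNIV :: nat set)"
      show "(\<lambda>z. real (occ (fst z) j l i)) \<in> borel_measurable (M \<Otimes>\<^sub>M Q)"
        unfolding M_def by (rule measurable_compose[OF measurable_fst occ_meas])
    next
      show "snd \<in> measurable (M \<Otimes>\<^sub>M Q) (count_space UNIV)"
        using measurable_snd[of M Q] unfolding Q_def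
        by (simp add: measurable_cong_sets[OF refl sets_measure_pmf_count_space])
    qed auto
    then show ?thesis unfolding H_def by (simp add: case_prod_unfold)
  qed
  have inner: "(\<integral>\<^sup>+ \<omega>. ennreal (H (\<omega>, N)) \<partial>M) = ennreal (fF p j l N)" for N
  proof -
    have "integrable M (\<lambda>\<omega>. real (occ \<omega> j l N))"
      by (rule M.integrable_const_bound[where B="real N"])
         (auto simp: M_def occ_meas occ_le[OF l])
    then have "(\<integral>\<^sup>+ \<omega>. ennreal (H (\<omega>, N)) \<partial>M) = ennreal (integral\<^sup>L M (\<lambda>\<omega>. real (occ \<omega> j l N)))"
      unfolding H_def by (simp add: nn_integral_eq_integral)
    also have "integral\<^sup>L M (\<lambda>\<omega>. real (occ \<omega> j l N)) = fF p j l N"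
      unfolding M_def EK_fixed_eq[symmetric] EK_fixed_def ..
    finally show ?thesis .
  qed
  have "EK_pois p j l t = integral\<^sup>L (M \<Otimes>\<^sub>M Q) H"
    unfolding EK_pois_def M_def Q_def H_def ..
  also have "\<dots> = enn2real (\<integral>\<^sup>+ z. ennreal (H z) \<partial>(M \<Otimes>\<^sub>M Q))"
    by (rule integral_eq_nn_integral) (use Hm in \<open>auto simp: H_def\<close>)
  also have "(\<integral>\<^sup>+ z. ennreal (H z) \<partial>(M \<Otimes>\<^sub>M Q)) = (\<integral>\<^sup>+ N. (\<integral>\<^sup>+ \<omega>. ennreal (H (\<omega>, N)) \<partial>M) \<partial>Q)"
    by (rule nn_integral_snd[symmetric]) (use Hm in measurable)
  also have "\<dots> = (\<integral>\<^sup>+ N. ennreal (fF p j l N) \<partial>Q)" unfolding inner ..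
  also have "\<dots> = ennreal (integral\<^sup>L Q (fF p j l))"
    unfolding Q_def using fF_poisson(1)[OF l t] fF_nonneg
    by (intro nn_integral_eq_integral) auto
  finally show ?thesis unfolding Q_def
    by (simp add: Bochner_Integration.integral_nonneg fF_nonneg)
qed

theorem lemma2p12:
  fixes p :: "nat pmf"
  assumes "infinite {k. pmf p k > 0}"
  shows "\<forall>l\<ge>1. \<exists>B::real. \<forall>j\<ge>1. \<forall>\<^sub>F t in at_top.
           \<bar>EK_pois p j l t - EK_fixed p j l (nat \<lfloor>t\<rfloor>)\<bar> \<le> B"
proof (intro allI impI exI)
  fix l :: nat and j :: nat
  assume l: "l \<ge> 1"
  show "\<forall>\<^sub>F t in at_top. \<bar>EK_pois p j l t - EK_fixed p j l (nat \<lfloor>t\<rfloor>)\<bar> \<le> 4 * real l + 1"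
    using eventually_ge_at_top[of "1::real"]
  proof eventually_elim
    case (elim t)
    then show ?case using EK_pois_eq[OF l elim] EK_fixed_eq fF_poisson(2)[OF l elim] by simp
  qed
qed

end
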